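(* Let $\alpha$ be a formula containing no points-to atom with $\mathcal P(\alpha)\subseteq\mathcal P_l$, and let $\alpha'$ be a decoration of $\alpha$. If $(s,h')\models_{\mathrm{dec}(\mathcal R)}\alpha'$ and $(s,h')\rhd_{\mathrm{id}}(s,h)$, then $(s,h)\models_{\mathcal R}\alpha$.
   Context: Separation logic: variables $\mathcal V$, constant $\bot$; formulas from $x\not\approx x'$, $x\approx x'$, $x\mapsto(t_1,\dots,t_k)$, $p(x_1,\dots,x_n)$, $*$, $\vee$, $\exists$. SID: finite set of rules $p(x_1,\dots,x_n)\Leftarrow\pi$ ($\pi$ quantifier-free separating conjunction of atoms), existential variables $\mathrm{fv}(\pi)\setminus\{x_1,\dots,x_n\}$; $\mathcal P(\phi)$: predicates reachable (reflexively) from those of $\phi$ through rule bodies. Locations $\mathcal L$ with $\ell_\bot$; stores $s$ map variables and $\bot$ to $\mathcal L$ with $\bot\in\mathrm{dom}(s)$, $s(x)=\ell_\bot$ iff $x=\bot$; heaps are finite partial maps $\mathcal L\to\mathcal L^k$ with $\ell_\bot\notin$ domain; $\models_{\mathcal R}$ standard SL semantics (predicate atoms via a rule and an extension of the store to its existential variables). Standing assumptions: $\mathcal R$ is an SID of progressing rules $p(x_1,\dots,x_n)\Leftarrow x_1\mapsto(y_1,\dots,y_\kappa)*\rho$ ($\rho$ free of points-to), part of an entailment problem $(\phi,\psi,\mathcal R)$; $\mathcal P_l=\mathcal P(\phi)$; $\vec w=(w_1,\dots,w_\nu)$, $\nu>0$, the free variables of $\phi,\psi$, not occurring in $\mathcal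 R$; stores considered contain $w_1,\dots,w_\nu$ in their domain; every rule of $\mathcal R$ has exactly $\mu$ existential variables. $\vec\bot$ ($\vec\ell_\bot$) is $\kappa+\nu+\mu$ copies of $\bot$ ($\ell_\bot$); $\mathsf{bot}$ is a unary predicate with single rule $\mathsf{bot}(x)\Leftarrow x\mapsto\vec\bot$, included in $\mathrm{dec}(\mathcal R)$. Decorations: for $p\in\mathcal P_l$ of arity $n$ and $X\subseteq\{1,\dots,n\}$, $p_X$ is a fresh predicate of arity $n+\nu$. A decoration of a formula $\alpha$ without points-to atoms with $\mathcal P(\alpha)\subseteq\mathcal P_l$ replaces each atom $q(y_1,\dots,y_m)$ by some $q_X(y_1,\dots,y_m,\vec w)$ with $X\subseteq\{1,\dots,m\}$ chosen per atom. $\mathrm{dec}(\mathcal R)$ is the set of rules $p_X(x_1,\dots,x_n,\vec w)\Leftarrow x_1\mapsto(y_1,\dots,y_\kappa,\vec w,z_1,\dots,z_\mu)\sigma*\rho'*\mathop{*}_{i\in I}\mathsf{bot}(z_i)$ where $p(x_1,\dots,x_n)\Leftarrow x_1\mapsto(y_1,\dots,y_\kappa)*\rho$ is in $\mathcal R$, $X\subseteq\{1,\dots,n\}$, $\{z_1,\dots,z_\mu\}$ is the set of its existential variables, $\sigma$ is a substitution with $\mathrm{dom}(\sigma)\subseteq\{z_1,\dots,z_\mu\}$, $\mathrm{img}(\sigma)\subseteq\{x_1,\dots,x_n,w_1,\dots,w_\nu,z_1,\dots,z_\mu\}$, $\rho'$ is a decoration of $\rho\sigma$, and $I\subseteq\{1,\dots,\mu\}$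 with $z_i\notin\mathrm{dom}(\sigma)$ for $i\in I$. Expansion: for $h:\mathcal L\to\mathcal L^\kappa$ and $h':\mathcal L\to\mathcal L^{\kappa+\nu+\mu}$, $(s,h')\rhd_{\mathrm{id}}(s,h)$ iff $h'=\mathrm{main}(h')\uplus\mathrm{aux}(h')$ with: $\mathrm{dom}(\mathrm{main}(h'))=\mathrm{dom}(h)$; for $\ell\in\mathrm{dom}(\mathrm{main}(h'))$, $h'(\ell)=(h(\ell),s(w_1),\dots,s(w_\nu),b_1,\dots,b_\mu)$ for some $b_i$; for $\ell\in\mathrm{dom}(\mathrm{aux}(h'))$, $h'(\ell)=\vec\ell_\bot$ and $\ell$ is among the last $\mu$ components of $h'(\ell')$ for some $\ell'\in\mathrm{dom}(\mathrm{main}(h'))$. *)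

theory Defs
  imports Main
begin

datatype 'v trm = BotT | V 'v

datatype ('v, 'q) form =
    Neq "'v trm" "'v trm"
  | Eq "'v trm" "'v trm"
  | Pto "'v trm" "'v trm list"
  | Pred 'q "'v trm list"
  | Sep "('v, 'q) form" "('v, 'q) form"
  | Or "('v, 'q) form" "('v, 'q) form"
  | Ex 'v "('v, 'q) form"

fun fv_trm :: "'v trm \<Rightarrow> 'v set" where
  "fv_trm BotT = {}"
| "fv_trm (V x) = {x}"

fun fv :: "('v, 'q) form \<Rightarrow> 'v set" where
  "fv (Neq a b) = fv_trm a \<union> fv_trm b"
| "fv (Eq a b) = fv_trm a \<union> fv_trm b"
| "fv (Pto a ts) = fv_trm a \<union> \<Union>(fv_trm ` set ts)"
| "fv (Pred q ts) = \<Union>(fv_trm ` set ts)"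
| "fv (Sep a b) = fv a \<union> fv b"
| "fv (Or a b) = fv a \<union> fv b"
| "fv (Ex x a) = fv a - {x}"

fun preds :: "('v, 'q) form \<Rightarrow> 'q set" where
  "preds (Pred q ts) = {q}"
| "preds (Sep a b) = preds a \<union> preds b"
| "preds (Or a b) = preds a \<union> preds b"
| "preds (Ex x a) = preds a"
| "preds _ = {}"

fun no_pto :: "('v, 'q) form \<Rightarrow> bool" where
  "no_pto (Pto a ts) = False"
| "no_pto (Sep a b) = (no_pto a \<and> no_pto b)"
| "no_pto (Or a b) = (no_pto a \<and> no_pto b)"
| "no_pto (Ex x a) = no_pto a"
| "no_pto _ = True"

fun is_patom :: "('v, 'q) form \<Rightarrow> bool" where
  "is_patom (Neq a b) = True"
| "is_patom (Eq a b) = True"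
| "is_patom (Pred q ts) = True"
| "is_patom _ = False"

text \<open>A rule  q(x_1,...,x_n) <= x_1 |-> (y_1,...,y_k) * a_1 * ... * a_m  is represented
  as the tuple (q, [x_1..x_n], [y_1..y_k], [a_1..a_m]).\<close>
type_synonym ('v, 'q) rule = "'q \<times> 'v list \<times> 'v trm list \<times> ('v, 'q) form list"

fun body :: "('v, 'q) rule \<Rightarrow> ('v, 'q) form" where
  "body (q, xs, ys, as) = foldl Sep (Pto (V (hd xs)) ys) as"

fun params :: "('v, 'q) rule \<Rightarrow> 'v list" where
  "params (q, xs, ys, as) = xs"

definition exvars :: "('v, 'q) rule \<Rightarrow> 'v set" where
  "exvars r = fv (body r) - set (params r)"

definition rule_vars :: "('v, 'q) rule \<Rightarrow> 'v set" where
  "rule_vars r = set (params r) \<union> fv (body r)"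

fun progressing :: "nat \<Rightarrow> ('v, 'q) rule \<Rightarrow> bool" where
  "progressing k (q, xs, ys, as) =
     (xs \<noteq> [] \<and> distinct xs \<and> length ys = k \<and> (\<forall>a\<in>set as. is_patom a))"

text \<open>P(phi): predicates reachable (reflexively) from those of phi.\<close>
inductive_set reach :: "('v, 'q) rule set \<Rightarrow> 'q set \<Rightarrow> 'q set" for R P where
  base: "q \<in> P \<Longrightarrow> q \<in> reach R P"
| step: "q \<in> reach R P \<Longrightarrow> (q, xs, ys, as) \<in> R \<Longrightarrow> a \<in> set as \<Longrightarrow> q' \<in> preds a
           \<Longrightarrow> q' \<in> reach R P"

type_synonym 'l heap = "'l \<rightharpoonup> 'l list"

fun ev :: "'l \<Rightarrow> ('v \<Rightarrow> 'l) \<Rightarrow> 'v trm \<Rightarrow> 'l" where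
  "ev lb s BotT = lb"
| "ev lb s (V x) = s x"

text \<open>Satisfaction (s,h) |=_R phi; lb is the location l_bot; stores map every variable to a
  location different from lb (and bot to lb, via ev).\<close>
inductive sat :: "('v, 'q) rule set \<Rightarrow> 'l \<Rightarrow> ('v \<Rightarrow> 'l) \<Rightarrow> 'l heap \<Rightarrow> ('v, 'q) form \<Rightarrow> bool"
  for R lb where
  sat_neq: "ev lb s a \<noteq> ev lb s b \<Longrightarrow> h = Map.empty \<Longrightarrow> sat R lb s h (Neq a b)"
| sat_eq: "ev lb s a = ev lb s b \<Longrightarrow> h = Map.empty \<Longrightarrow> sat R lb s h (Eq a b)"
| sat_pto: "ev lb s a \<noteq> lb \<Longrightarrow> h = [ev lb s a \<mapsto> map (ev lb s) ts] \<Longrightarrow> sat R lb s h (Pto a ts)"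
| sat_sep: "dom h1 \<inter> dom h2 = {} \<Longrightarrow> h = h1 ++ h2 \<Longrightarrow> sat R lb s h1 a \<Longrightarrow> sat R lb s h2 b
            \<Longrightarrow> sat R lb s h (Sep a b)"
| sat_or1: "sat R lb s h a \<Longrightarrow> sat R lb s h (Or a b)"
| sat_or2: "sat R lb s h b \<Longrightarrow> sat R lb s h (Or a b)"
| sat_ex: "l \<noteq> lb \<Longrightarrow> sat R lb (s(x := l)) h a \<Longrightarrow> sat R lb s h (Ex x a)"
| sat_pred: "(q, xs, ys, as) \<in> R \<Longrightarrow> length xs = length ts \<Longrightarrow> (\<forall>v. s' v \<noteq> lb)
             \<Longrightarrow> (\<forall>i<length xs. s' (xs ! i) = ev lb s (ts ! i))
             \<Longrightarrow> sat R lb s' h (body (q, xs, ys, as)) \<Longrightarrow> sat R lb s h (Pred q ts)"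

text \<open>Decorated predicate symbols p_X (X a set of argument positions, 1-based) and bot.\<close>
datatype 'p dpred = DecP 'p "nat set" | BotP

fun decor :: "'v list \<Rightarrow> ('v, 'p) form \<Rightarrow> ('v, 'p dpred) form \<Rightarrow> bool" where
  "decor ws (Neq a b) f = (f = Neq a b)"
| "decor ws (Eq a b) f = (f = Eq a b)"
| "decor ws (Pto a ts) f = False"
| "decor ws (Pred q ts) f =
     (\<exists>X. X \<subseteq> {1..length ts} \<and> f = Pred (DecP q X) (ts @ map V ws))"
| "decor ws (Sep a b) f = (case f of Sep a' b' \<Rightarrow> decor ws a a' \<and> decor ws b b' | _ \<Rightarrow> False)"
| "decor ws (Or a b) f = (case f of Or a' b' \<Rightarrow> decor ws a a' \<and> decor ws b b' | _ \<Rightarrow> False)"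
| "decor ws (Ex x a) f = (case f of Ex x' a' \<Rightarrow> x' = x \<and> decor ws a a' | _ \<Rightarrow> False)"

fun trm_subst :: "('v \<Rightarrow> 'v) \<Rightarrow> 'v trm \<Rightarrow> 'v trm" where
  "trm_subst \<sigma> BotT = BotT"
| "trm_subst \<sigma> (V x) = V (\<sigma> x)"

text \<open>Substitution, applied only to quantifier-free atoms (rule bodies).\<close>
fun subst :: "('v \<Rightarrow> 'v) \<Rightarrow> ('v, 'q) form \<Rightarrow> ('v, 'q) form" where
  "subst \<sigma> (Neq a b) = Neq (trm_subst \<sigma> a) (trm_subst \<sigma> b)"
| "subst \<sigma> (Eq a b) = Eq (trm_subst \<sigma> a) (trm_subst \<sigma> b)"
| "subst \<sigma> (Pto a ts) = Pto (trm_subst \<sigma> a) (map (trm_subst \<sigma>) ts)"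
| "subst \<sigma> (Pred q ts) = Pred q (map (trm_subst \<sigma>) ts)"
| "subst \<sigma> (Sep a b) = Sep (subst \<sigma> a) (subst \<sigma> b)"
| "subst \<sigma> (Or a b) = Or (subst \<sigma> a) (subst \<sigma> b)"
| "subst \<sigma> (Ex x a) = Ex x (subst \<sigma> a)"

text \<open>dec(R), for points-to arity kappa, mu existential variables per rule, set Pl of
  predicates and the vector ws of free variables.  The existential variables z_1..z_mu are
  listed as zs (indices 0-based here), the substitution sigma is a function 'v => 'v whose
  domain is {v. sigma v ~= v}, and I is a set of 0-based indices into zs.
  The rule for bot is included (for every choice of its formal parameter name).\<close>
definition decR :: "nat \<Rightarrow> nat \<Rightarrow> 'p set \<Rightarrow> 'v list \<Rightarrow> ('v, 'p) rule set
                     \<Rightarrow> ('v, 'p dpred) rule set" where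
  "decR k m Pl ws R =
    {(DecP p X, xs @ ws,
      map (trm_subst \<sigma>) ys @ map V ws @ map (\<lambda>z. V (\<sigma> z)) zs,
      as' @ map (\<lambda>i. Pred BotP [V (zs ! i)]) (sorted_list_of_set I))
     | p xs ys as X zs \<sigma> as' I.
        (p, xs, ys, as) \<in> R \<and> p \<in> Pl \<and> X \<subseteq> {1..length xs}
        \<and> distinct zs \<and> set zs = exvars (p, xs, ys, as)
        \<and> (\<forall>v. \<sigma> v \<noteq> v \<longrightarrow> v \<in> set zs \<and> \<sigma> v \<in> set xs \<union> set ws \<union> set zs)
        \<and> list_all2 (decor ws) (map (subst \<sigma>) as) as'
        \<and> I \<subseteq> {0..<length zs} \<and> (\<forall>i\<in>I. \<sigma> (zs ! i) = zs ! i)}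
    \<union> {(BotP, [x], replicate (k + length ws + m) BotT, []) | x. True}"

text \<open>expands lb k m ws s h' h  is  (s,h') |>_id (s,h).\<close>
definition expands :: "'l \<Rightarrow> nat \<Rightarrow> nat \<Rightarrow> 'v list \<Rightarrow> ('v \<Rightarrow> 'l) \<Rightarrow> 'l heap \<Rightarrow> 'l heap \<Rightarrow> bool" where
  "expands lb k m ws s h' h =
    (\<exists>M A. h' = M ++ A \<and> dom M \<inter> dom A = {} \<and> dom M = dom h
       \<and> (\<forall>l\<in>dom M. \<exists>bs. length bs = m \<and> M l = Some (the (h l) @ map s ws @ bs))
       \<and> (\<forall>l\<in>dom A. A l = Some (replicate (k + length ws + m) lb)
              \<and> (\<exists>l'\<in>dom M. l \<in> set (drop (k + length ws) (the (M l'))))))"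

end

theory Submission
  imports Defs
begin


inductive_cases satE_Neq: "sat R lb s h (Neq a b)"
inductive_cases satE_Eq: "sat R lb s h (Eq a b)"
inductive_cases satE_Pto: "sat R lb s h (Pto a ts)"
inductive_cases satE_Sep: "sat R lb s h (Sep a b)"
inductive_cases satE_Or: "sat R lb s h (Or a b)"
inductive_cases satE_Ex: "sat R lb s h (Ex x a)"
inductive_cases satE_Pred: "sat R lb s h (Pred q ts)"

lemma ev_subst: "ev lb s (trm_subst \<sigma> t) = ev lb (s \<circ> \<sigma>) t"
  by (cases t) auto

lemma sat_subst:
  assumes "sat R lb s g (subst \<sigma> a)" "is_patom a"
  shows "sat R lb (s \<circ> \<sigma>) g a"
proof (cases a)
  case (Neq x y) then show ?thesis using assms
    by (auto elim!: satE_Neq intro!: sat.intros simp: ev_subst)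
next
  case (Eq x y) then show ?thesis using assms
    by (auto elim!: satE_Eq intro!: sat.intros simp: ev_subst)
next
  case (Pred q ts)
  with assms(1) obtain xs ys as s' where
    "(q, xs, ys, as) \<in> R" "length xs = length (map (trm_subst \<sigma>) ts)" "\<forall>v. s' v \<noteq> lb"
    "\<forall>i<length xs. s' (xs ! i) = ev lb s (map (trm_subst \<sigma>) ts ! i)"
    "sat R lb s' g (body (q, xs, ys, as))"
    by (auto elim!: satE_Pred)
  then show ?thesis unfolding Pred
    by (intro sat_pred[of q xs ys as R ts s' lb]) (auto simp: ev_subst)
qed (use assms in auto)

lemma map_le_add_left: "dom a \<inter> dom b = {} \<Longrightarrow> a \<subseteq>\<^sub>m a ++ b"
  by (auto simp: map_le_def map_add_def split: option.split)

lemma map_le_add_right: "b \<subseteq>\<^sub>m a ++ b"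
  by (rule map_le_map_add)

lemma restrict_union: "h |` (A \<union> B) = h |` A ++ h |` B"
  by (auto simp: restrict_map_def map_add_def fun_eq_iff split: option.splits)

lemma foldl_sep_dec:
  "sat D lb s g (foldl Sep a bs) \<Longrightarrow> \<exists>g0 gs. length gs = length bs \<and> sat D lb s g0 a
     \<and> (\<forall>i<length bs. sat D lb s (gs!i) (bs!i)) \<and> g0 \<subseteq>\<^sub>m g \<and> (\<forall>i<length gs. gs!i \<subseteq>\<^sub>m g)
     \<and> dom g = dom g0 \<union> (\<Union>i<length gs. dom (gs!i))
     \<and> (\<forall>i<length gs. dom (gs!i) \<inter> dom g0 = {})
     \<and> (\<forall>i j. i < j \<longrightarrow> j < length gs \<longrightarrow> dom (gs!i) \<inter> dom (gs!j) = {})"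
proof (induction bs arbitrary: g rule: rev_induct)
  case Nil then show ?case by (intro exI[of _ g] exI[of _ "[]"]) (simp add: map_le_refl)
next
  case (snoc b bs)
  from snoc.prems have X: "sat D lb s g (Sep (foldl Sep a bs) b)" by simp
  obtain g1 g2 where g12: "dom g1 \<inter> dom g2 = {}" "g = g1 ++ g2"
     "sat D lb s g1 (foldl Sep a bs)" "sat D lb s g2 b" using X by (rule satE_Sep) blast
  obtain g0 gs where IH1: "length gs = length bs" and IH2: "sat D lb s g0 a"
     and IH3: "(\<forall>i<length bs. sat D lb s (gs!i) (bs!i))" and IH4: "g0 \<subseteq>\<^sub>m g1"
     and IH5: "(\<forall>i<length gs. gs!i \<subseteq>\<^sub>m g1)"
     and IH6: "dom g1 = dom g0 \<union> (\<Union>i<length gs. dom (gs!i))"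
     and IH7: "(\<forall>i<length gs. dom (gs!i) \<inter> dom g0 = {})"
     and IH8: "(\<forall>i j. i < j \<longrightarrow> j < length gs \<longrightarrow> dom (gs!i) \<inter> dom (gs!j) = {})"
     using snoc.IH[OF g12(3)] by (elim exE conjE) (rule that; assumption)
  have le1: "g1 \<subseteq>\<^sub>m g" using g12(1) unfolding g12(2) by (rule map_le_add_left)
  have le2: "g2 \<subseteq>\<^sub>m g" unfolding g12(2) by (rule map_le_add_right)
  have d1: "dom (gs!i) \<subseteq> dom g1" if "i < length gs" for i using IH5 that by (simp add: map_le_implies_dom_le)
  have d0: "dom g0 \<subseteq> dom g1" using IH4 by (simp add: map_le_implies_dom_le)
  show ?case
  proof (intro exI[of _ g0] exI[of _ "gs @ [g2]"] conjI allI impI)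
    show "length (gs @ [g2]) = length (bs @ [b])" using IH1 by simp
    show "sat D lb s g0 a" by (fact IH2)
    show "sat D lb s ((gs @ [g2]) ! i) ((bs @ [b]) ! i)" if "i < length (bs @ [b])" for i
    proof (cases "i < length bs")
      case True then show ?thesis using IH1 IH3 by (simp add: nth_append)
    next
      case False then have "i = length bs" using that by simp
      then show ?thesis using IH1 g12(4) by (simp add: nth_append)
    qed
    show "g0 \<subseteq>\<^sub>m g" using IH4 le1 map_le_trans by blast
    show "(gs @ [g2]) ! i \<subseteq>\<^sub>m g" if "i < length (gs @ [g2])" for i
    proof (cases "i < length gs")
      case True then show ?thesis using IH5 le1 map_le_trans by (simp add: nth_append) blast
    next
      case False then have "i = length gs" using that by simp
      then show ?thesis using le2 by (simp add: nth_append)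
    qed
    have "(\<Union>i<length (gs @ [g2]). dom ((gs @ [g2]) ! i)) = (\<Union>i<length gs. dom (gs!i)) \<union> dom g2"
      by (simp add: lessThan_Suc nth_append Un_commute)
    then show "dom g = dom g0 \<union> (\<Union>i<length (gs @ [g2]). dom ((gs @ [g2]) ! i))"
      using IH6 g12(2) by (simp add: Un_ac)
    show "dom ((gs @ [g2]) ! i) \<inter> dom g0 = {}" if "i < length (gs @ [g2])" for i
    proof (cases "i < length gs")
      case True then show ?thesis using IH7 by (simp add: nth_append)
    next
      case False then have "i = length gs" using that by simp
      then show ?thesis using g12(1) d0 by (simp add: nth_append) blast
    qed
    show "dom ((gs @ [g2]) ! i) \<inter> dom ((gs @ [g2]) ! j) = {}" if "i < j" "j < length (gs @ [g2])" for i j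
    proof (cases "j < length gs")
      case True then show ?thesis using that IH8 by (simp add: nth_append)
    next
      case False
      then have "j = length gs" using that by simp
      then show ?thesis using that g12(1) d1[of i] by (simp add: nth_append) blast
    qed
  qed
qed

lemma notin_Un_contra: "l \<in> X \<union> Y \<Longrightarrow> l \<notin> X \<Longrightarrow> l \<notin> Y \<Longrightarrow> False"
  by blast

lemma subset_disj: "X \<subseteq> Y \<Longrightarrow> Y \<inter> Z = {} \<Longrightarrow> X \<inter> Z = {}"
  by blast

lemma map_le_restrict: "f \<subseteq>\<^sub>m H \<Longrightarrow> dom f \<subseteq> A \<Longrightarrow> f \<subseteq>\<^sub>m H |` A"
  by (auto simp: map_le_def restrict_map_def)

lemma foldl_sep_comp:
  "length gs = length bs \<Longrightarrow> sat D lb s g0 a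
     \<Longrightarrow> (\<forall>i<length bs. sat D lb s (gs!i) (bs!i)) \<Longrightarrow> g0 \<subseteq>\<^sub>m H \<Longrightarrow> (\<forall>i<length gs. gs!i \<subseteq>\<^sub>m H)
     \<Longrightarrow> dom H = dom g0 \<union> (\<Union>i<length gs. dom (gs!i))
     \<Longrightarrow> (\<forall>i<length gs. dom (gs!i) \<inter> dom g0 = {})
     \<Longrightarrow> (\<forall>i j. i < j \<longrightarrow> j < length gs \<longrightarrow> dom (gs!i) \<inter> dom (gs!j) = {})
     \<Longrightarrow> sat D lb s H (foldl Sep a bs)"
proof (induction bs arbitrary: gs H rule: rev_induct)
  case Nil
  then have "dom H = dom g0" by simp
  then have "H = g0" using Nil(4) by (metis map_le_antisym map_le_def)
  then show ?case using Nil by simp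
next
  case (snoc b bs)
  obtain gs' gn where gs: "gs = gs' @ [gn]" using snoc.prems(1)
    by (cases gs rule: rev_exhaust) auto
  let ?A = "dom g0 \<union> (\<Union>i<length gs'. dom (gs'!i))"
  have un: "(\<Union>i<length gs. dom (gs ! i)) = (\<Union>i<length gs'. dom (gs'!i)) \<union> dom gn"
    unfolding gs by (simp add: lessThan_Suc nth_append Un_commute)
  have gnH: "gn \<subseteq>\<^sub>m H" using snoc.prems(5)[rule_format, of "length gs'"] gs by simp
  have disj: "?A \<inter> dom gn = {}"
  proof -
    have "dom gn \<inter> dom g0 = {}" using snoc.prems(7)[rule_format, of "length gs'"] gs by simp
    moreover have "dom (gs'!i) \<inter> dom gn = {}" if "i < length gs'" for i
      using snoc.prems(8)[rule_format, of i "length gs'"] gs that by (simp add: nth_append)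
    ultimately show ?thesis by blast
  qed
  have dH: "dom H = ?A \<union> dom gn" using snoc.prems(6) un by (simp add: Un_ac)
  have Hsplit: "H = H |` ?A ++ gn"
  proof (rule ext)
    fix l show "H l = (H |` ?A ++ gn) l"
    proof (cases "l \<in> dom gn")
      case True
      then have "(H |` ?A ++ gn) l = gn l" by (rule map_add_dom_app_simps(1))
      moreover have "gn l = H l" using True gnH by (auto simp: map_le_def)
      ultimately show ?thesis by simp
    next
      case False
      then have e: "(H |` ?A ++ gn) l = (H |` ?A) l" by (rule map_add_dom_app_simps(3))
      show ?thesis
      proof (cases "l \<in> ?A")
        case True then show ?thesis unfolding e by simp
      next
        case F2: False
        have "l \<notin> dom H"
        proof
          assume "l \<in> dom H"
          then have "l \<in> ?A \<union> dom gn" by (simp only: dH)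
          then show False using F2 False by (rule notin_Un_contra)
        qed
        then show ?thesis unfolding e using F2 by auto
      qed
    qed
  qed
  have len: "length gs' = length bs" using snoc.prems(1) gs by simp
  have F: "sat D lb s (H |` ?A) (foldl Sep a bs)"
  proof (rule snoc.IH[of gs'])
    show "length gs' = length bs" by (fact len)
    show "sat D lb s g0 a" by fact
    show "\<forall>i<length bs. sat D lb s (gs' ! i) (bs ! i)"
    proof (intro allI impI)
      fix i assume "i < length bs"
      then show "sat D lb s (gs' ! i) (bs ! i)"
        using snoc.prems(3)[rule_format, of i] len gs by (simp add: nth_append)
    qed
    show "g0 \<subseteq>\<^sub>m H |` ?A" using snoc.prems(4)
      by (intro map_le_restrict) auto
    show "\<forall>i<length gs'. gs' ! i \<subseteq>\<^sub>m H |` ?A"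
    proof (intro allI impI)
      fix i assume i: "i < length gs'"
      have "gs' ! i \<subseteq>\<^sub>m H" using snoc.prems(5)[rule_format, of i] i gs by (simp add: nth_append)
      moreover have "dom (gs' ! i) \<subseteq> ?A"
        using UN_upper[of i "{..<length gs'}" "\<lambda>i. dom (gs'!i)"] i by (intro le_supI2) simp
      ultimately show "gs' ! i \<subseteq>\<^sub>m H |` ?A" by (rule map_le_restrict)
    qed
    show "dom (H |` ?A) = ?A" using dH by auto
    show "\<forall>i<length gs'. dom (gs' ! i) \<inter> dom g0 = {}"
    proof (intro allI impI)
      fix i assume i: "i < length gs'"
      then show "dom (gs' ! i) \<inter> dom g0 = {}"
        using snoc.prems(7)[rule_format, of i] gs by (simp add: nth_append)
    qed
    show "\<forall>i j. i < j \<longrightarrow> j < length gs' \<longrightarrow> dom (gs' ! i) \<inter> dom (gs' ! j) = {}"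
    proof (intro allI impI)
      fix i j assume ij: "i < j" "j < length gs'"
      then show "dom (gs' ! i) \<inter> dom (gs' ! j) = {}"
        using snoc.prems(8)[rule_format, of i j] gs by (simp add: nth_append)
    qed
  qed
  moreover have G: "sat D lb s gn b"
    using snoc.prems(3)[rule_format, of "length bs"] len gs by (simp add: nth_append)
  moreover have DJ: "dom (H |` ?A) \<inter> dom gn = {}"
  proof (rule subset_disj[OF _ disj])
    show "dom (H |` ?A) \<subseteq> ?A" by (simp only: dom_restrict) (rule Int_lower2)
  qed
  have "sat D lb s H (Sep (foldl Sep a bs) b)" by (rule sat_sep[OF DJ Hsplit F G])
  then show ?case by simp
qed



lemma restrict_mono_le: "A \<subseteq> B \<Longrightarrow> h |` A \<subseteq>\<^sub>m h |` B"
  by (auto simp: map_le_def restrict_map_def)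

lemma restrict_single: "h r = Some c \<Longrightarrow> h |` {r} = [r \<mapsto> c]"
  by (auto simp: restrict_map_def fun_eq_iff)

context
  fixes R :: "('v,'p) rule set" and Pl :: "'p set" and ws :: "'v list" and \<kappa> \<mu> :: nat
    and lb :: 'l and h h' :: "'l heap"
  assumes H1: "\<And>l v. h' l = Some v \<Longrightarrow> \<kappa> < length v \<Longrightarrow> v ! \<kappa> \<noteq> lb \<Longrightarrow> h l = Some (take \<kappa> v)"
  and H2: "\<And>l. h' l = Some (replicate (\<kappa> + length ws + \<mu>) lb) \<Longrightarrow> h l = None"
  and H3: "\<forall>r\<in>R. progressing \<kappa> r"
  and H4: "ws \<noteq> []"
  and H5: "finite (dom h')"
begin

lemma bot_cell:
  assumes sp: "sat (decR \<kappa> \<mu> Pl ws R) lb s g (Pred BotP ts)"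
    and le: "g \<subseteq>\<^sub>m h'"
  shows "dom g \<inter> dom h = {}"
proof -
  obtain xs ys as s' where r: "(BotP, xs, ys, as) \<in> decR \<kappa> \<mu> Pl ws R"
    and b: "sat (decR \<kappa> \<mu> Pl ws R) lb s' g (foldl Sep (Pto (V (hd xs)) ys) as)"
    using sp by (rule satE_Pred) (rule that)
  from r have "\<exists>x. xs = [x] \<and> ys = replicate (\<kappa> + length ws + \<mu>) BotT \<and> as = []"
    unfolding decR_def by auto
  then obtain x where e: "xs = [x]" "ys = replicate (\<kappa> + length ws + \<mu>) BotT" "as = []" by blast
  from b e have "sat (decR \<kappa> \<mu> Pl ws R) lb s' g (Pto (V x) (replicate (\<kappa> + length ws + \<mu>) BotT))"
    by simp
  then have g: "g = [s' x \<mapsto> replicate (\<kappa> + length ws + \<mu>) lb]"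
    by (rule satE_Pto) simp
  then have "h' (s' x) = Some (replicate (\<kappa> + length ws + \<mu>) lb)" using le
    by (auto simp: map_le_def)
  then have "h (s' x) = None" by (rule H2)
  then show ?thesis using g by auto
qed


lemma key:
  "sat (decR \<kappa> \<mu> Pl ws R) lb s g f \<Longrightarrow> g \<subseteq>\<^sub>m h' \<Longrightarrow> (\<forall>x. s x \<noteq> lb) \<Longrightarrow> decor ws \<alpha> f
   \<Longrightarrow> sat R lb s (h |` dom g) \<alpha>"
proof (induction g arbitrary: s \<alpha> f rule: measure_induct_rule[where f="\<lambda>g. card (dom g)"])
  case (less g)
  have inner: "card (dom g1) \<le> card (dom g) \<Longrightarrow> sat (decR \<kappa> \<mu> Pl ws R) lb s1 g1 f1 \<Longrightarrow> g1 \<subseteq>\<^sub>m h'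
     \<Longrightarrow> (\<forall>x. s1 x \<noteq> lb) \<Longrightarrow> decor ws \<alpha>1 f1 \<Longrightarrow> sat R lb s1 (h |` dom g1) \<alpha>1"
    for \<alpha>1 s1 f1 g1
  proof (induction \<alpha>1 arbitrary: s1 f1 g1)
    case (Neq a b)
    from Neq.prems(5) have f: "f1 = Neq a b" by simp
    from Neq.prems(2) f have "ev lb s1 a \<noteq> ev lb s1 b" "g1 = Map.empty"
      by (auto elim: satE_Neq)
    then show ?case by (auto intro: sat_neq)
  next
    case (Eq a b)
    from Eq.prems(5) have f: "f1 = Eq a b" by simp
    from Eq.prems(2) f have "ev lb s1 a = ev lb s1 b" "g1 = Map.empty"
      by (auto elim: satE_Eq)
    then show ?case by (auto intro: sat_eq)
  next
    case (Pto a ts)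
    then show ?case by simp
  next
    case (Pred q ts)
    let ?D = "decR \<kappa> \<mu> Pl ws R"
    from Pred.prems(5) obtain X where f: "f1 = Pred (DecP q X) (ts @ map V ws)" by auto
    from Pred.prems(2) f have sp: "sat ?D lb s1 g1 (Pred (DecP q X) (ts @ map V ws))" by simp
    obtain xs0 ys0 as0 s' where r0: "(DecP q X, xs0, ys0, as0) \<in> ?D"
      and l0: "length xs0 = length (ts @ map V ws)" and s'ok: "\<forall>v. s' v \<noteq> lb"
      and s'x: "\<forall>i<length (ts @ map V ws). s' (xs0 ! i) = ev lb s1 ((ts @ map V ws) ! i)"
      and bd: "sat ?D lb s' g1 (foldl Sep (Pto (V (hd xs0)) ys0) as0)"
      using sp by (rule satE_Pred) (rule that)
    from r0 obtain xs ys as zs \<sigma> as' I where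
      e1: "xs0 = xs @ ws" and e2: "ys0 = map (trm_subst \<sigma>) ys @ map V ws @ map (\<lambda>z. V (\<sigma> z)) zs"
      and e3: "as0 = as' @ map (\<lambda>i. Pred BotP [V (zs ! i)]) (sorted_list_of_set I)"
      and rR: "(q, xs, ys, as) \<in> R" and zse: "set zs = exvars (q, xs, ys, as)"
      and \<sigma>c: "\<forall>v. \<sigma> v \<noteq> v \<longrightarrow> v \<in> set zs \<and> \<sigma> v \<in> set xs \<union> set ws \<union> set zs"
      and la: "list_all2 (decor ws) (map (subst \<sigma>) as) as'"
      unfolding decR_def by auto
    have pr: "xs \<noteq> [] \<and> distinct xs \<and> length ys = \<kappa> \<and> (\<forall>a\<in>set as. is_patom a)"
      using H3 rR by fastforce
    have hd0: "hd xs0 = hd xs" using pr e1 by simp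
    have \<sigma>fix: "\<sigma> x = x" if "x \<in> set xs" for x
    proof (rule ccontr)
      assume "\<sigma> x \<noteq> x"
      then have "x \<in> set zs" using \<sigma>c by simp
      then have "x \<in> exvars (q, xs, ys, as)" using zse by simp
      then show False using that by (simp add: exvars_def)
    qed
    let ?s = "s' \<circ> \<sigma>"
    obtain g0 gs where G1: "length gs = length as0" and G2: "sat ?D lb s' g0 (Pto (V (hd xs)) ys0)"
      and G3: "\<forall>i<length as0. sat ?D lb s' (gs!i) (as0!i)" and G4: "g0 \<subseteq>\<^sub>m g1"
      and G5: "\<forall>i<length gs. gs!i \<subseteq>\<^sub>m g1"
      and G6: "dom g1 = dom g0 \<union> (\<Union>i<length gs. dom (gs!i))"
      and G7: "\<forall>i<length gs. dom (gs!i) \<inter> dom g0 = {}"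
      and G8: "\<forall>i j. i < j \<longrightarrow> j < length gs \<longrightarrow> dom (gs!i) \<inter> dom (gs!j) = {}"
      using foldl_sep_dec[OF bd[unfolded hd0]] by (elim exE conjE) (rule that; assumption)
    define r where "r = s' (hd xs)"
    define v where "v = map (ev lb s') ys0"
    from G2 have g0: "g0 = [r \<mapsto> v]" and rlb: "r \<noteq> lb"
      by (auto elim: satE_Pto simp: r_def v_def)
    have g1r: "g1 r = Some v" using G4 g0 by (auto simp: map_le_def)
    have "h' r = Some v" using Pred.prems(3) g1r by (force simp: map_le_def)
    moreover have lv: "\<kappa> < length v" using pr H4 by (simp add: v_def e2)
    moreover have "v ! \<kappa> \<noteq> lb" using pr H4 s'ok
      by (cases ws) (simp_all add: v_def e2 nth_append)
    ultimately have hr: "h r = Some (take \<kappa> v)" by (rule H1)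
    have tv: "take \<kappa> v = map (ev lb ?s) ys" using pr
      by (simp add: v_def e2 ev_subst)
    define n where "n = length as'"
    have lasn: "length as = n" using la unfolding n_def by (metis list_all2_lengthD length_map)
    have la0: "length as0 = n + length (sorted_list_of_set I)" by (simp add: e3 n_def)
    have nG: "n \<le> length gs" using G1 la0 by simp
    have fin: "finite (dom g1)"
      by (rule finite_subset[OF map_le_implies_dom_le[OF Pred.prems(3)] H5])
    have rin: "r \<in> dom g1" using g1r by auto
    have dg0: "dom g0 = {r}" using g0 by simp
    have gsle: "gs!i \<subseteq>\<^sub>m h'" if "i < length gs" for i
      using G5 that map_le_trans Pred.prems(3) by metis
    have comp: "sat R lb ?s (h |` dom (gs!i)) (as!i)" if i: "i < n" for i
    proof -
      have i0: "i < length gs" using i nG by simp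
      have sat1: "sat ?D lb s' (gs!i) (as'!i)"
        using G3[rule_format, of i] i la0 by (simp add: e3 nth_append n_def)
      have dec: "decor ws (subst \<sigma> (as!i)) (as'!i)"
        using list_all2_nthD[OF la, of i] i lasn by simp
      have sub: "dom (gs!i) \<subseteq> dom g1" using G5 i0 map_le_implies_dom_le by metis
      have "r \<notin> dom (gs!i)" using G7[rule_format, OF i0] dg0 by auto
      then have "dom (gs!i) \<subset> dom g1" using sub rin by auto
      then have "card (dom (gs!i)) < card (dom g1)" using fin by (rule psubset_card_mono[rotated])
      then have cl: "card (dom (gs!i)) < card (dom g)" using Pred.prems(1) by linarith
      have "sat R lb s' (h |` dom (gs!i)) (subst \<sigma> (as!i))"
        by (rule less.IH[OF cl sat1 gsle[OF i0] s'ok dec])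
      moreover have "is_patom (as!i)" using pr i lasn by simp
      ultimately show ?thesis by (rule sat_subst)
    qed
    have bots: "dom (gs!i) \<inter> dom h = {}" if i: "n \<le> i" "i < length gs" for i
    proof -
      have "as0 ! i = Pred BotP [V (zs ! (sorted_list_of_set I ! (i - n)))]"
        using i G1 la0 by (simp add: e3 nth_append n_def)
      then have "sat ?D lb s' (gs!i) (Pred BotP [V (zs ! (sorted_list_of_set I ! (i - n)))])"
        using G3 i G1 by metis
      then show ?thesis by (rule bot_cell[OF _ gsle[OF i(2)]])
    qed
    define gsR where "gsR = map (\<lambda>g. h |` dom g) (take n gs)"
    have lR: "length gsR = n" using nG by (simp add: gsR_def)
    have gsRi: "gsR ! i = h |` dom (gs ! i)" if "i < n" for i
      using that nG by (simp add: gsR_def)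
    have body: "sat R lb ?s (h |` dom g1) (foldl Sep (Pto (V (hd xs)) ys) as)"
    proof (rule foldl_sep_comp[of gsR as _ _ _ "h |` dom g0"])
      show "length gsR = length as" using lR lasn by simp
      have "?s (hd xs) = r" using \<sigma>fix pr by (simp add: r_def)
      moreover have "h |` dom g0 = [r \<mapsto> map (ev lb ?s) ys]"
        unfolding dg0 using hr tv by (simp add: restrict_single)
      ultimately show "sat R lb ?s (h |` dom g0) (Pto (V (hd xs)) ys)"
        using rlb by (auto intro!: sat_pto)
      show "\<forall>i<length as. sat R lb ?s (gsR ! i) (as ! i)"
        using comp gsRi lasn by simp
      show "h |` dom g0 \<subseteq>\<^sub>m h |` dom g1"
        by (rule restrict_mono_le[OF map_le_implies_dom_le[OF G4]])
      show "\<forall>i<length gsR. gsR ! i \<subseteq>\<^sub>m h |` dom g1"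
      proof (intro allI impI)
        fix i assume "i < length gsR"
        then have i: "i < n" using lR by simp
        then have "dom (gs ! i) \<subseteq> dom g1" using G5 nG map_le_implies_dom_le by (metis less_le_trans)
        then show "gsR ! i \<subseteq>\<^sub>m h |` dom g1" unfolding gsRi[OF i] by (rule restrict_mono_le)
      qed
      show "dom (h |` dom g1) = dom (h |` dom g0) \<union> (\<Union>i<length gsR. dom (gsR ! i))"
      proof (rule set_eqI)
        fix l
        show "l \<in> dom (h |` dom g1) \<longleftrightarrow> l \<in> dom (h |` dom g0) \<union> (\<Union>i<length gsR. dom (gsR ! i))"
        proof
          assume "l \<in> dom (h |` dom g1)"
          then have lh: "l \<in> dom h" and lg: "l \<in> dom g1" by auto
          from lg G6 have "l \<in> dom g0 \<or> (\<exists>i<length gs. l \<in> dom (gs!i))" by auto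
          then show "l \<in> dom (h |` dom g0) \<union> (\<Union>i<length gsR. dom (gsR ! i))"
          proof
            assume "l \<in> dom g0" then show ?thesis using lh by auto
          next
            assume "\<exists>i<length gs. l \<in> dom (gs!i)"
            then obtain i where i: "i < length gs" "l \<in> dom (gs!i)" by auto
            have "i < n"
            proof (rule ccontr)
              assume "\<not> i < n"
              then have "dom (gs!i) \<inter> dom h = {}" using bots i(1) by simp
              then show False using i(2) lh by auto
            qed
            then have "l \<in> dom (gsR ! i)" using gsRi i(2) lh by auto
            then show ?thesis using \<open>i < n\<close> lR by auto
          qed
        next
          assume "l \<in> dom (h |` dom g0) \<union> (\<Union>i<length gsR. dom (gsR ! i))"
          then show "l \<in> dom (h |` dom g1)"
          proof
            assume "l \<in> dom (h |` dom g0)"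
            then show ?thesis using G6 by auto
          next
            assume "l \<in> (\<Union>i<length gsR. dom (gsR ! i))"
            then obtain i where i: "i < n" "l \<in> dom (gsR ! i)" using lR by auto
            then have "l \<in> dom h" "l \<in> dom (gs ! i)" using gsRi by auto
            moreover have "i < length gs" using i nG by simp
            ultimately show ?thesis using G6 by auto
          qed
        qed
      qed
      show "\<forall>i<length gsR. dom (gsR ! i) \<inter> dom (h |` dom g0) = {}"
      proof (intro allI impI)
        fix i assume "i < length gsR"
        then have i: "i < n" using lR by simp
        then have "dom (gs ! i) \<inter> dom g0 = {}" using G7 nG by simp
        then show "dom (gsR ! i) \<inter> dom (h |` dom g0) = {}" unfolding gsRi[OF i] by auto
      qed
      show "\<forall>i j. i < j \<longrightarrow> j < length gsR \<longrightarrow> dom (gsR ! i) \<inter> dom (gsR ! j) = {}"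
      proof (intro allI impI)
        fix i j assume ij: "i < j" "j < length gsR"
        then have "dom (gs ! i) \<inter> dom (gs ! j) = {}" using G8 lR nG by simp
        moreover have "i < n" "j < n" using ij lR by simp_all
        ultimately show "dom (gsR ! i) \<inter> dom (gsR ! j) = {}" using gsRi by auto
      qed
    qed
    have lxs: "length xs = length ts" using l0 e1 by simp
    show ?case unfolding f
    proof (rule sat_pred[OF rR lxs])
      show "\<forall>v. ?s v \<noteq> lb" using s'ok by simp
      show "\<forall>i<length xs. ?s (xs ! i) = ev lb s1 (ts ! i)"
      proof (intro allI impI)
        fix i assume i: "i < length xs"
        have "?s (xs ! i) = s' (xs0 ! i)" using \<sigma>fix i by (simp add: e1 nth_append)
        also have "\<dots> = ev lb s1 ((ts @ map V ws) ! i)" using s'x i lxs by simp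
        also have "\<dots> = ev lb s1 (ts ! i)" using i lxs by (simp add: nth_append)
        finally show "?s (xs ! i) = ev lb s1 (ts ! i)" .
      qed
      show "sat R lb ?s (h |` dom g1) (body (q, xs, ys, as))" using body by simp
    qed
  next
    case (Sep a b)
    from Sep.prems(5) obtain a' b' where f: "f1 = Sep a' b'" "decor ws a a'" "decor ws b b'"
      by (cases f1) auto
    from Sep.prems(2) f(1) have X: "sat (decR \<kappa> \<mu> Pl ws R) lb s1 g1 (Sep a' b')" by simp
    obtain ga gb where gab: "dom ga \<inter> dom gb = {}" "g1 = ga ++ gb"
      "sat (decR \<kappa> \<mu> Pl ws R) lb s1 ga a'" "sat (decR \<kappa> \<mu> Pl ws R) lb s1 gb b'"
      using X by (rule satE_Sep) blast
    have fin: "finite (dom g1)"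
      by (rule finite_subset[OF map_le_implies_dom_le[OF Sep.prems(3)] H5])
    have lea: "ga \<subseteq>\<^sub>m g1" unfolding gab(2) using gab(1) by (rule map_le_add_left)
    have leb: "gb \<subseteq>\<^sub>m g1" unfolding gab(2) by (rule map_le_add_right)
    have ca: "card (dom ga) \<le> card (dom g)"
      using card_mono[OF fin map_le_implies_dom_le[OF lea]] Sep.prems(1) by linarith
    have cb: "card (dom gb) \<le> card (dom g)"
      using card_mono[OF fin map_le_implies_dom_le[OF leb]] Sep.prems(1) by linarith
    have A: "sat R lb s1 (h |` dom ga) a"
      by (rule Sep.IH(1)[OF ca gab(3) map_le_trans[OF lea Sep.prems(3)] Sep.prems(4) f(2)])
    have B: "sat R lb s1 (h |` dom gb) b"
      by (rule Sep.IH(2)[OF cb gab(4) map_le_trans[OF leb Sep.prems(3)] Sep.prems(4) f(3)])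
    have e: "h |` dom g1 = h |` dom ga ++ h |` dom gb"
      unfolding gab(2) dom_map_add by (simp add: restrict_union Un_commute)
    have d: "dom (h |` dom ga) \<inter> dom (h |` dom gb) = {}" using gab(1) by auto
    show ?case unfolding f(1) by (rule sat_sep[OF d e A B])
  next
    case (Or a b)
    from Or.prems(5) obtain a' b' where f: "f1 = Or a' b'" "decor ws a a'" "decor ws b b'"
      by (cases f1) auto
    from Or.prems(2) f(1) have X: "sat (decR \<kappa> \<mu> Pl ws R) lb s1 g1 (Or a' b')" by simp
    then show ?case
    proof (rule satE_Or)
      assume "sat (decR \<kappa> \<mu> Pl ws R) lb s1 g1 a'"
      from Or.IH(1)[OF Or.prems(1) this Or.prems(3,4) f(2)] show ?case by (rule sat_or1)
    next
      assume "sat (decR \<kappa> \<mu> Pl ws R) lb s1 g1 b'"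
      from Or.IH(2)[OF Or.prems(1) this Or.prems(3,4) f(3)] show ?case by (rule sat_or2)
    qed
  next
    case (Ex x a)
    from Ex.prems(5) obtain a' where f: "f1 = Ex x a'" "decor ws a a'"
      by (cases f1) auto
    from Ex.prems(2) f(1) have X: "sat (decR \<kappa> \<mu> Pl ws R) lb s1 g1 (Ex x a')" by simp
    then show ?case
    proof (rule satE_Ex)
      fix l assume l: "l \<noteq> lb" and sa: "sat (decR \<kappa> \<mu> Pl ws R) lb (s1(x := l)) g1 a'"
      have st: "\<forall>y. (s1(x := l)) y \<noteq> lb" using Ex.prems(4) l by auto
      from Ex.IH[OF Ex.prems(1) sa Ex.prems(3) st f(2)] show ?case
        by (rule sat_ex[OF l])
    qed
  qed
  show ?case by (rule inner[OF le_refl less.prems])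
qed
end

theorem mainTheorem18:
  fixes R :: "('v, 'p) rule set"
    and \<phi> \<psi> \<alpha> :: "('v, 'p) form"
    and \<alpha>' :: "('v, 'p dpred) form"
    and ws :: "'v list"
    and \<kappa> \<mu> :: nat
    and lb :: 'l
    and s :: "'v \<Rightarrow> 'l"
    and h h' :: "'l heap"
  assumes "finite R"
    and "\<forall>r\<in>R. progressing \<kappa> r"
    and "\<forall>r\<in>R. card (exvars r) = \<mu>"
    and "distinct ws" and "ws \<noteq> []" and "set ws = fv \<phi> \<union> fv \<psi>"
    and "\<forall>r\<in>R. set ws \<inter> rule_vars r = {}"
    and "no_pto \<alpha>"
    and "preds \<alpha> \<subseteq> reach R (preds \<phi>)"
    and "decor ws \<alpha> \<alpha>'"
    and "\<forall>x. s x \<noteq> lb"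
    and "finite (dom h)" and "lb \<notin> dom h" and "\<forall>l\<in>dom h. length (the (h l)) = \<kappa>"
    and "finite (dom h')" and "lb \<notin> dom h'"
    and "sat (decR \<kappa> \<mu> (reach R (preds \<phi>)) ws R) lb s h' \<alpha>'"
    and "expands lb \<kappa> \<mu> ws s h' h"
  shows "sat R lb s h \<alpha>"
proof -
  note hyps = assms
  obtain M A where MA1: "h' = M ++ A" and MA2: "dom M \<inter> dom A = {}" and MA3: "dom M = dom h"
    and MA4: "\<forall>l\<in>dom M. \<exists>bs. length bs = \<mu> \<and> M l = Some (the (h l) @ map s ws @ bs)"
    and MA5: "\<forall>l\<in>dom A. A l = Some (replicate (\<kappa> + length ws + \<mu>) lb)
              \<and> (\<exists>l'\<in>dom M. l \<in> set (drop (\<kappa> + length ws) (the (M l'))))"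
    using hyps(18) unfolding expands_def by (elim exE conjE) (rule that; assumption)
  have w0: "(c @ map s ws @ bs) ! \<kappa> = s (hd ws)" if "length c = \<kappa>" for c bs :: "'l list"
    using that hyps(5) by (cases ws) (simp_all add: nth_append)
  have H1: "h l = Some (take \<kappa> v)" if hl: "h' l = Some v" and kl: "\<kappa> < length v" and vk: "v ! \<kappa> \<noteq> lb" for l v
  proof (cases "l \<in> dom A")
    case True
    then have "h' l = A l" unfolding MA1 by (rule map_add_dom_app_simps(1))
    then have "v = replicate (\<kappa> + length ws + \<mu>) lb" using MA5 True hl by simp
    then show ?thesis using kl vk by simp
  next
    case False
    then have "h' l = M l" unfolding MA1 by (rule map_add_dom_app_simps(3))
    then have "M l = Some v" using hl by simp
    then have lM: "l \<in> dom M" by (rule domI)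
    then obtain bs where "M l = Some (the (h l) @ map s ws @ bs)" using MA4 by auto
    moreover have "length (the (h l)) = \<kappa>" using hyps(14) lM MA3 by auto
    moreover obtain c where "h l = Some c" using lM MA3 by auto
    ultimately show ?thesis using hl \<open>h' l = M l\<close> by (auto dest: sym)
  qed
  have H2: "h l = None" if hl: "h' l = Some (replicate (\<kappa> + length ws + \<mu>) lb)" for l
  proof (rule ccontr)
    assume "h l \<noteq> None"
    then have lM: "l \<in> dom M" using MA3 by auto
    then have "l \<notin> dom A" using MA2 by auto
    then have "h' l = M l" unfolding MA1 by (rule map_add_dom_app_simps(3))
    moreover obtain bs where "M l = Some (the (h l) @ map s ws @ bs)" using MA4 lM by auto
    moreover have len: "length (the (h l)) = \<kappa>" using hyps(14) lM MA3 by auto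
    ultimately have "replicate (\<kappa> + length ws + \<mu>) lb = the (h l) @ map s ws @ bs" using hl by simp
    then have "replicate (\<kappa> + length ws + \<mu>) lb ! \<kappa> = (the (h l) @ map s ws @ bs) ! \<kappa>" by simp
    then have "lb = s (hd ws)" using w0[OF len] hyps(5) by simp
    then show False using hyps(11) by metis
  qed
  have "sat R lb s (h |` dom h') \<alpha>"
    by (rule key[OF H1 H2 hyps(2) hyps(5) hyps(15) hyps(17) map_le_refl hyps(11) hyps(10)])
  moreover have "h |` dom h' = h"
  proof -
    have sub: "dom h \<subseteq> dom h'" using MA1 MA3 by auto
    show ?thesis
    proof (rule ext)
      fix l show "(h |` dom h') l = h l"
      proof (cases "l \<in> dom h")
        case True
        have "l \<in> dom h'" using sub True by (rule subsetD)
        then show ?thesis by simp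
      next
        case False
        then show ?thesis by (simp add: restrict_map_def domIff)
      qed
    qed
  qed
  ultimately show ?thesis by simp
qed

end
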